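(* There is an absolute constant $c > 0$ such that for every integer $n > 1$ there exist a set $P$ of $n$ points in the Euclidean plane $\mathbb{R}^2$ and a set $\mathcal{L}$ of $n$ lines in $\mathbb{R}^2$ such that the incidence graph $G = (P \cup \mathcal{L}, I(P,\mathcal{L}))$ contains no cycle of length $10$ (as a subgraph) and \[ |I(P,\mathcal{L})| \geq c\, n^{1+1/15}. \]
   Context: For a finite set $P$ of points and a finite set $\mathcal{L}$ of lines in the plane, $I(P,\mathcal{L}) = \{(p,\ell) \in P \times \mathcal{L} : p \in \ell\}$ is the set of incidences. The incidence graph of $(P,\mathcal{L})$ is the bipartite graph with vertex classes $P$ and $\mathcal{L}$ whose edge set is $I(P,\mathcal{L})$, i.e. $p \in P$ is adjacent to $\ell \in \mathcal{L}$ iff $p \in \ell$. A graph is $C_{10}$-free if it has no subgraph isomorphic to the cycle of length $10$. *)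

theory Defs
  imports Complex_Main
begin

type_synonym point = "real \<times> real"

definition is_line :: "point set \<Rightarrow> bool" where
  "is_line l \<longleftrightarrow> (\<exists>a b c. (a, b) \<noteq> (0, 0) \<and> l = {(x, y). a * x + b * y = c})"

definition incidences :: "point set \<Rightarrow> point set set \<Rightarrow> (point \<times> point set) set" where
  "incidences P L = {(p, l). p \<in> P \<and> l \<in> L \<and> p \<in> l}"

definition inc_adj :: "point set \<Rightarrow> point set set \<Rightarrow> (point + point set) \<Rightarrow> (point + point set) \<Rightarrow> bool" where
  "inc_adj P L u v \<longleftrightarrow>
     (\<exists>p l. (p, l) \<in> incidences P L \<and> ((u = Inl p \<and> v = Inr l) \<or> (u = Inr l \<and> v = Inl p)))"

definition has_cycle_of_length :: "('v \<Rightarrow> 'v \<Rightarrow> bool) \<Rightarrow> nat \<Rightarrow> bool" where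
  "has_cycle_of_length E k \<longleftrightarrow>
     (\<exists>f :: nat \<Rightarrow> 'v. inj_on f {0..<k} \<and> (\<forall>i<k. E (f i) (f ((i + 1) mod k))))"

definition C10_free :: "('v \<Rightarrow> 'v \<Rightarrow> bool) \<Rightarrow> bool" where
  "C10_free E \<longleftrightarrow> \<not> has_cycle_of_length E 10"

end

theory Submission
  imports Defs "HOL-Library.FuncSet"
begin


definition good :: "nat \<Rightarrow> int set \<Rightarrow> bool" where
  "good m A \<longleftrightarrow> (\<forall>a \<Delta> :: nat \<Rightarrow> int.
     (\<forall>i<5. a i \<in> insert 0 A \<and> \<bar>\<Delta> i\<bar> < int m) \<and> (\<Sum>i<5. \<Delta> i) = 0 \<and> (\<Sum>i<5. a i * \<Delta> i) = 0 \<longrightarrow>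
     (\<forall>v. (\<Sum>i<5. if a i = v then \<Delta> i else 0) = 0))"

lemma good_empty: "good m {}"
  unfolding good_def
proof (intro allI impI)
  fix a \<Delta> :: "nat \<Rightarrow> int" and v
  assume h: "(\<forall>i<5. a i \<in> insert 0 {} \<and> \<bar>\<Delta> i\<bar> < int m) \<and> (\<Sum>i<5. \<Delta> i) = 0 \<and> (\<Sum>i<5. a i * \<Delta> i) = 0"
  show "(\<Sum>i<5. if a i = v then \<Delta> i else 0) = 0"
  proof (cases "v = 0")
    case True
    have "(\<Sum>i<5. if a i = v then \<Delta> i else 0) = (\<Sum>i<5. \<Delta> i)"
      using h True by (intro sum.cong) auto
    then show ?thesis using h by simp
  next
    case False
    show ?thesis
      using h False by (intro sum.neutral) auto
  qed
qed

definition Bad :: "nat \<Rightarrow> int set \<Rightarrow> int set" where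
  "Bad m A = (\<lambda>(a,\<Delta>,C). (-(\<Sum>i<5. a i * \<Delta> i)) div C) `
     ((\<Pi>\<^sub>E i\<in>{..<5::nat}. insert 0 A) \<times> (\<Pi>\<^sub>E i\<in>{..<5::nat}. {-(int m)<..<int m}) \<times> ({-5*int m..5*int m} - {0}))"

lemma card_Bad:
  assumes "finite A"
  shows "card (Bad m A) \<le> (card A + 1)^5 * (2*m)^5 * (10*m+1)"
proof -
  let ?X = "(\<Pi>\<^sub>E i\<in>{..<5::nat}. insert 0 A)" and ?Y = "(\<Pi>\<^sub>E i\<in>{..<5::nat}. {-(int m)<..<int m})"
    and ?Z = "({-5*int m..5*int m} - {0})"
  have cX: "card ?X \<le> (card A + 1)^5"
    using assms by (simp add: card_PiE card_insert_if)
  have cY: "card ?Y \<le> (2*m)^5"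
  proof -
    have "nat (2 * int m - 1) \<le> 2*m" by simp
    then have "nat (2 * int m - 1)^5 \<le> (2*m)^5" by (rule power_mono) simp
    then show ?thesis by (simp add: card_PiE)
  qed
  have cZ: "card ?Z \<le> 10*m+1"
    by (simp add: card_Diff_singleton_if)
  have "card (Bad m A) \<le> card (?X \<times> ?Y \<times> ?Z)"
    unfolding Bad_def by (rule card_image_le) (use assms in \<open>auto intro!: finite_PiE\<close>)
  also have "\<dots> = card ?X * card ?Y * card ?Z" by (simp add: card_cartesian_product)
  also have "\<dots> \<le> (card A + 1)^5 * (2*m)^5 * (10*m+1)"
    using cX cY cZ by (intro mult_mono) auto
  finally show ?thesis .
qed

lemma good_insert:
  assumes g: "good m A" and s0: "s \<noteq> 0" and sA: "s \<notin> A" and sB: "s \<notin> Bad m A"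
  shows "good m (insert s A)"
  unfolding good_def
proof (intro allI impI)
  fix a \<Delta> :: "nat \<Rightarrow> int" and v
  assume h: "(\<forall>i<5. a i \<in> insert 0 (insert s A) \<and> \<bar>\<Delta> i\<bar> < int m) \<and> (\<Sum>i<5. \<Delta> i) = 0 \<and> (\<Sum>i<5. a i * \<Delta> i) = 0"
  define C where "C = (\<Sum>i<5. if a i = s then \<Delta> i else 0)"
  define a' where "a' = (\<lambda>i. if i < 5 then (if a i = s then 0 else a i) else undefined)"
  define \<Delta>' where "\<Delta>' = (\<lambda>i. if i < 5 then (if a i = s then 0 else \<Delta> i) else undefined)"
  have a'E: "a' \<in> (\<Pi>\<^sub>E i\<in>{..<5::nat}. insert 0 A)" using h unfolding a'_def by (force simp: PiE_iff extensional_def)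
  have D'E: "\<Delta>' \<in> (\<Pi>\<^sub>E i\<in>{..<5::nat}. {-(int m)<..<int m})" using h unfolding \<Delta>'_def by (force simp: PiE_iff extensional_def)
  have e1: "(\<Sum>i<5. a i * \<Delta> i) = s * C + (\<Sum>i<5. a' i * \<Delta>' i)"
    unfolding C_def sum_distrib_left sum.distrib[symmetric]
    by (intro sum.cong) (auto simp: a'_def \<Delta>'_def)
  have e2: "(\<Sum>i<5. \<Delta> i) = C + (\<Sum>i<5. \<Delta>' i)"
    unfolding C_def sum.distrib[symmetric]
    by (intro sum.cong) (auto simp: \<Delta>'_def)
  have Cb: "\<bar>C\<bar> \<le> 5 * int m"
  proof -
    have "\<bar>C\<bar> \<le> (\<Sum>i<5. \<bar>if a i = s then \<Delta> i else 0\<bar>)" unfolding C_def by (rule sum_abs)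
    also have "\<dots> \<le> (\<Sum>i<(5::nat). int m)" using h by (intro sum_mono) auto
    finally show ?thesis by simp
  qed
  show "(\<Sum>i<5. if a i = v then \<Delta> i else 0) = 0"
  proof (cases "C = 0")
    case False
    have "s * C = - (\<Sum>i<5. a' i * \<Delta>' i)" using e1 h by simp
    then have "s = (- (\<Sum>i<5. a' i * \<Delta>' i)) div C" using False by (metis nonzero_mult_div_cancel_right)
    moreover have "C \<in> {-5*int m..5*int m} - {0}" using Cb False by auto
    ultimately have "s \<in> Bad m A" unfolding Bad_def
      by (rule_tac x="(a', \<Delta>', C)" in image_eqI) (use a'E D'E in auto)
    with sB show ?thesis by simp
  next
    case True
    have h': "(\<forall>i<5. a' i \<in> insert 0 A \<and> \<bar>\<Delta>' i\<bar> < int m) \<and> (\<Sum>i<5. \<Delta>' i) = 0 \<and> (\<Sum>i<5. a' i * \<Delta>' i) = 0"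
    proof (intro conjI allI impI)
      fix i :: nat assume "i < 5"
      then show "a' i \<in> insert 0 A" using a'E by (auto simp: PiE_iff)
      show "\<bar>\<Delta>' i\<bar> < int m" using D'E \<open>i<5\<close> unfolding PiE_iff abs_less_iff by force
    next
      show "(\<Sum>i<5. \<Delta>' i) = 0" using e2 h True by simp
      show "(\<Sum>i<5. a' i * \<Delta>' i) = 0" using e1 h True by simp
    qed
    show ?thesis
    proof (cases "v = s")
      case True
      then show ?thesis using \<open>C = 0\<close> C_def by simp
    next
      case False
      have "(\<Sum>i<5. if a i = v then \<Delta> i else 0) = (\<Sum>i<5. if a' i = v then \<Delta>' i else 0)"
        using False by (intro sum.cong) (auto simp: a'_def \<Delta>'_def)
      also have "\<dots> = 0" using g h' unfolding good_def by blast
      finally show ?thesis .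
    qed
  qed
qed

lemma greedy_bound:
  fixes t m :: nat
  assumes "t < m"
  shows "t + (t + 1)^5 * (2*m)^5 * (10*m+1) + 1 < 1024 * m^11"
proof -
  have m1: "m \<ge> 1" using assms by simp
  have "(t+1)^5 \<le> m^5" using assms by (intro power_mono) auto
  moreover have "10*m+1 \<le> 11*m" using m1 by simp
  ultimately have "(t + 1)^5 * (2*m)^5 * (10*m+1) \<le> m^5 * (2*m)^5 * (11*m)"
    by (intro mult_mono) auto
  also have "\<dots> = 352 * m^11"
  proof -
    have "m^11 = m^5 * m^5 * m" by (simp flip: power_add power_Suc2)
    then show ?thesis by (simp add: power_mult_distrib)
  qed
  finally have a: "(t + 1)^5 * (2*m)^5 * (10*m+1) \<le> 352 * m^11" .
  have "m \<le> m^11" using m1 by (simp add: self_le_power)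
  then have "t + 1 \<le> m^11" using assms by simp
  moreover have "m^11 \<ge> 1" using m1 by simp
  ultimately show ?thesis using a by linarith
qed

lemma greedy:
  fixes m :: nat
  shows "t \<le> m \<Longrightarrow> \<exists>A. finite A \<and> A \<subseteq> {0..<int (1024 * m^11)} \<and> card A = t \<and> good m A"
proof (induction t)
  case 0
  then show ?case using good_empty by (intro exI[of _ "{}"]) auto
next
  case (Suc t)
  then obtain A where A: "finite A" "A \<subseteq> {0..<int (1024 * m^11)}" "card A = t" "good m A" by auto
  let ?S = "int (1024 * m^11)"
  let ?B = "A \<union> Bad m A \<union> {0}"
  have fB: "finite (Bad m A)" unfolding Bad_def using A(1) by (auto intro!: finite_PiE)
  have "card ?B \<le> card (A \<union> Bad m A) + card {0::int}" by (rule card_Un_le)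
  also have "\<dots> \<le> card A + card (Bad m A) + 1" using card_Un_le[of A "Bad m A"] by simp
  also have "\<dots> \<le> t + (t + 1)^5 * (2*m)^5 * (10*m+1) + 1"
    using card_Bad[OF A(1), of m] A(3) by simp
  also have "\<dots> < 1024 * m^11" using greedy_bound Suc.prems by simp
  finally have cB: "card ?B < 1024 * m^11" .
  have "\<not> {0..<?S} \<subseteq> ?B"
  proof
    assume "{0..<?S} \<subseteq> ?B"
    then have "card {0..<?S} \<le> card ?B" using fB A(1) by (intro card_mono) auto
    moreover have "card {0..<?S} = 1024 * m^11" by (simp only: card_atLeastLessThan_int diff_zero nat_int)
    ultimately show False using cB by simp
  qed
  then obtain s where s: "s \<in> {0..<?S}" "s \<notin> ?B" by blast
  have "good m (insert s A)" using good_insert[OF A(4)] s by auto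
  moreover have "card (insert s A) = Suc t" using s A by auto
  ultimately show ?case using s A by (intro exI[of _ "insert s A"]) auto
qed



lemma cyc5: "(\<Sum>j<5. g (Suc j mod 5)) = (\<Sum>j<(5::nat). (g j :: 'a::comm_monoid_add))"
proof -
  have five: "(5::nat) = Suc 4" by simp
  have "(\<Sum>j<Suc 4. g (Suc j mod 5)) = (\<Sum>j<4. g (Suc j mod 5)) + g (Suc 4 mod 5)"
    by (rule sum.lessThan_Suc)
  also have "(\<Sum>j<4. g (Suc j mod 5)) = (\<Sum>j<4. g (Suc j))"
    by (rule sum.cong) auto
  also have "g (Suc 4 mod 5) = g 0" by simp
  also have "(\<Sum>j<4. g (Suc j)) + g 0 = (\<Sum>j<Suc 4. g j)"
    unfolding sum.lessThan_Suc_shift by (rule add.commute)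
  finally show ?thesis by (simp only: five)
qed

lemma five_aux:
  fixes a0 a1 a2 a3 a4 d0 d1 d2 d3 d4 :: int
  assumes "a0 \<noteq> a1" "a1 \<noteq> a2" "a2 \<noteq> a3" "a3 \<noteq> a4" "a4 \<noteq> a0"
    "d0 \<noteq> 0" "d1 \<noteq> 0" "d2 \<noteq> 0" "d3 \<noteq> 0" "d4 \<noteq> 0"
    and S: "\<And>v. (if a0 = v then d0 else 0) + (if a1 = v then d1 else 0) + (if a2 = v then d2 else 0)
       + (if a3 = v then d3 else 0) + (if a4 = v then d4 else 0) = 0"
  shows False
proof -
  have s0: "d0 + (if a2 = a0 then d2 else 0) + (if a3 = a0 then d3 else 0) = 0"
    using S[of a0] assms(1,5) by (simp add: eq_commute[of a1] eq_commute[of a4])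
  have s1: "d1 + (if a3 = a1 then d3 else 0) + (if a4 = a1 then d4 else 0) = 0"
    using S[of a1] assms(1,2) by (simp add: eq_commute[of a2] eq_commute[of a1 a0])
  have s2: "d2 + (if a0 = a2 then d0 else 0) + (if a4 = a2 then d4 else 0) = 0"
    using S[of a2] assms(2,3) by (simp add: eq_commute[of a3] eq_commute[of a2 a1] add.assoc add.left_commute)
  have s3: "d3 + (if a0 = a3 then d0 else 0) + (if a1 = a3 then d1 else 0) = 0"
    using S[of a3] assms(3,4) by (simp add: eq_commute[of a4] eq_commute[of a3 a2] add.assoc add.left_commute)
  have s4: "d4 + (if a1 = a4 then d1 else 0) + (if a2 = a4 then d2 else 0) = 0"
    using S[of a4] assms(4,5) by (simp add: eq_commute[of a0] eq_commute[of a4 a3] add.assoc add.left_commute)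
  have p0: "a0 = a2 \<or> a0 = a3" using s0 assms(6) by (auto split: if_splits)
  have p1: "a1 = a3 \<or> a1 = a4" using s1 assms(7) by (auto split: if_splits)
  have p2: "a2 = a4 \<or> a2 = a0" using s2 assms(8) by (auto split: if_splits)
  have p3: "a3 = a0 \<or> a3 = a1" using s3 assms(9) by (auto split: if_splits)
  have p4: "a4 = a1 \<or> a4 = a2" using s4 assms(10) by (auto split: if_splits)
  show False using p0 p1 p2 p3 p4 assms(1-5) by metis
qed

lemma five:
  fixes a \<Delta> :: "nat \<Rightarrow> int"
  assumes "\<forall>i<5. a i \<noteq> a (Suc i mod 5)" "\<forall>i<5. \<Delta> i \<noteq> 0"
    "\<forall>v. (\<Sum>i<5. if a i = v then \<Delta> i else 0) = 0"
  shows False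
proof -
  have e: "(\<Sum>i<5. if a i = v then \<Delta> i else 0) = (if a 0 = v then \<Delta> 0 else 0) + (if a 1 = v then \<Delta> 1 else 0) + (if a 2 = v then \<Delta> 2 else 0)
       + (if a 3 = v then \<Delta> 3 else 0) + (if a 4 = v then \<Delta> 4 else 0)" for v
    by (simp add: eval_nat_numeral)
  have m: "Suc 1 mod 5 = (2::nat)" "Suc 2 mod 5 = (3::nat)" "Suc 3 mod 5 = (4::nat)" "Suc 4 mod 5 = (0::nat)" "Suc 0 mod 5 = (1::nat)"
    by presburger+
  have n: "a 0 \<noteq> a 1" "a 1 \<noteq> a 2" "a 2 \<noteq> a 3" "a 3 \<noteq> a 4" "a 4 \<noteq> a 0"
  proof -
    show "a 1 \<noteq> a 2" using assms(1)[rule_format, of 1] unfolding m by simp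
    show "a 2 \<noteq> a 3" using assms(1)[rule_format, of 2] unfolding m by simp
    show "a 3 \<noteq> a 4" using assms(1)[rule_format, of 3] unfolding m by simp
    show "a 4 \<noteq> a 0" using assms(1)[rule_format, of 4] unfolding m by simp
    show "a 0 \<noteq> a 1" using assms(1)[rule_format, of 0] unfolding m by simp
  qed
  have d: "\<Delta> 0 \<noteq> 0" "\<Delta> 1 \<noteq> 0" "\<Delta> 2 \<noteq> 0" "\<Delta> 3 \<noteq> 0" "\<Delta> 4 \<noteq> 0"
    using assms(2) by auto
  show False
    by (rule five_aux[OF n d]) (use assms(3) e in metis)
qed



definition line :: "int \<Rightarrow> real \<Rightarrow> point set" where
  "line a b = {(x,y). y = of_int a * x + b}"

lemma cycle_core:
  fixes a :: "nat \<Rightarrow> int" and b Y :: "nat \<Rightarrow> real" and X :: "nat \<Rightarrow> nat"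
  assumes g: "good m A" and aA: "\<forall>j<5. a j \<in> A" and Xm: "\<forall>j<5. X j < m"
    and inc: "\<forall>j<5. (real (X j), Y j) \<in> line (a j) (b j) \<and> (real (X (Suc j mod 5)), Y (Suc j mod 5)) \<in> line (a j) (b j)"
    and ip: "inj_on (\<lambda>j. (real (X j), Y j)) {..<5}"
    and il: "inj_on (\<lambda>j. line (a j) (b j)) {..<5}"
  shows False
proof -
  define \<Delta> where "\<Delta> j = int (X (Suc j mod 5)) - int (X j)" for j
  have Yeq: "Y j = of_int (a j) * real (X j) + b j" "Y (Suc j mod 5) = of_int (a j) * real (X (Suc j mod 5)) + b j" if "j < 5" for j
  proof -
    have "(real (X j), Y j) \<in> line (a j) (b j)" "(real (X (Suc j mod 5)), Y (Suc j mod 5)) \<in> line (a j) (b j)"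
      using inc that by blast+
    then show "Y j = of_int (a j) * real (X j) + b j" "Y (Suc j mod 5) = of_int (a j) * real (X (Suc j mod 5)) + b j"
      unfolding line_def by simp_all
  qed
  have dY: "Y (Suc j mod 5) - Y j = of_int (a j * \<Delta> j)" if "j < 5" for j
    using Yeq[OF that] unfolding \<Delta>_def by (simp add: algebra_simps)
  have "(\<Sum>j<5. Y (Suc j mod 5) - Y j) = 0" by (simp add: sum_subtractf cyc5[of Y])
  moreover have "(\<Sum>j<5. of_int (a j * \<Delta> j) :: real) = (\<Sum>j<5. Y (Suc j mod 5) - Y j)"
    by (rule sum.cong) (simp_all add: dY)
  ultimately have "real_of_int (\<Sum>j<5. a j * \<Delta> j) = 0" by (simp only: of_int_sum)
  then have s1: "(\<Sum>j<5. a j * \<Delta> j) = 0" by (simp only: of_int_eq_0_iff)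
  have s0: "(\<Sum>j<5. \<Delta> j) = 0" unfolding \<Delta>_def by (simp add: sum_subtractf cyc5[of "\<lambda>j. int (X j)"])
  have bd: "\<forall>j<5. a j \<in> insert 0 A \<and> \<bar>\<Delta> j\<bar> < int m"
  proof (intro allI impI conjI)
    fix j :: nat assume j: "j < 5"
    then show "a j \<in> insert 0 A" using aA by auto
    have k1: "X (Suc j mod 5) < m" using Xm by simp
    have k2: "X j < m" using Xm j by simp
    show "\<bar>\<Delta> j\<bar> < int m" using k1 k2 unfolding \<Delta>_def by linarith
  qed
  have grp: "\<forall>v. (\<Sum>j<5. if a j = v then \<Delta> j else 0) = 0"
    using g[unfolded good_def, rule_format, OF conjI[OF bd conjI[OF s0 s1]]] by blast
  have ne: "j \<noteq> Suc j mod 5" if "j < 5" for j :: nat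
    using that by (cases "j = 4") auto
  have D0: "\<forall>j<5. \<Delta> j \<noteq> 0"
  proof (intro allI impI notI)
    fix j :: nat assume j: "j < 5" and "\<Delta> j = 0"
    then have "X (Suc j mod 5) = X j" unfolding \<Delta>_def by simp
    then have "(real (X j), Y j) = (real (X (Suc j mod 5)), Y (Suc j mod 5))"
      using Yeq[OF j] by simp
    from inj_onD[OF ip this] have "j = Suc j mod 5" using j by simp
    then show False using ne[OF j] by simp
  qed
  have A0: "\<forall>j<5. a j \<noteq> a (Suc j mod 5)"
  proof (intro allI impI notI)
    fix j :: nat assume j: "j < 5" and e: "a j = a (Suc j mod 5)"
    let ?k = "Suc j mod 5"
    have k: "?k < 5" by simp
    have "b j = b ?k" using Yeq(2)[OF j] Yeq(1)[OF k] e by simp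
    then have "line (a j) (b j) = line (a ?k) (b ?k)" using e by simp
    from inj_onD[OF il this] have "j = ?k" using j k by simp
    then show False using ne[OF j] by simp
  qed
  show False using five[OF A0 D0 grp] .
qed



lemma adj_isl: "inc_adj P L u v \<Longrightarrow> isl u \<noteq> isl v"
  unfolding inc_adj_def by auto

lemma adj_LR: "inc_adj P L (Inl p) (Inr l) \<Longrightarrow> (p, l) \<in> incidences P L"
  unfolding inc_adj_def by auto

lemma adj_RL: "inc_adj P L (Inr l) (Inl p) \<Longrightarrow> (p, l) \<in> incidences P L"
  unfolding inc_adj_def by auto

lemma shift_inj: "inj_on (\<lambda>i::nat. (i+1) mod 10) {0..<10}"
  unfolding inj_on_def by (auto simp: mod_Suc split: if_splits)

lemma cycle_Inl:
  assumes "has_cycle_of_length (inc_adj P L) 10"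
  shows "\<exists>g::nat \<Rightarrow> _. inj_on g {0..<10} \<and> (\<forall>i<10. inc_adj P L (g i) (g ((i + 1) mod 10))) \<and> isl (g 0)"
proof -
  obtain f :: "nat \<Rightarrow> _" where f: "inj_on f {0..<10}" "\<forall>i<10. inc_adj P L (f i) (f ((i + 1) mod 10))"
    using assms unfolding has_cycle_of_length_def by blast
  show ?thesis
  proof (cases "isl (f 0)")
    case True then show ?thesis using f by blast
  next
    case False
    define g where "g i = f ((i+1) mod 10)" for i
    have "inj_on g {0..<10}" unfolding g_def
      by (rule comp_inj_on[OF shift_inj, unfolded o_def]) (use f(1) in \<open>auto intro: inj_on_subset\<close>)
    moreover have "\<forall>i<10. inc_adj P L (g i) (g ((i + 1) mod 10))"
      unfolding g_def using f(2) by auto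
    moreover have "isl (g 0)" unfolding g_def using False adj_isl f(2) by fastforce
    ultimately show ?thesis by blast
  qed
qed

lemma cycle_extract:
  assumes "has_cycle_of_length (inc_adj P L) 10"
  shows "\<exists>p l. inj_on p {..<5} \<and> inj_on l {..<5} \<and>
     (\<forall>j<5. (p j, l j) \<in> incidences P L \<and> (p (Suc j mod 5), l j) \<in> incidences P L)"
proof -
  obtain g :: "nat \<Rightarrow> _" where g: "inj_on g {0..<10}" "\<forall>i<10. inc_adj P L (g i) (g ((i + 1) mod 10))" "isl (g 0)"
    using cycle_Inl[OF assms] by blast
  have par: "(i::nat) < 10 \<Longrightarrow> isl (g i) = even i" for i
  proof (induction i)
    case 0 then show ?case using g(3) by simp
  next
    case (Suc i)
    then have "inc_adj P L (g i) (g (Suc i))" using g(2) by (metis Suc_eq_plus1 Suc_lessD mod_less)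
    then show ?case using Suc adj_isl by fastforce
  qed
  define p where "p j = projl (g (2*j))" for j
  define l where "l j = projr (g (2*j+1))" for j
  have gp: "g (2*j) = Inl (p j)" if "j < 5" for j
    using par[of "2*j"] that unfolding p_def by simp
  have gl: "g (2*j+1) = Inr (l j)" if "j < 5" for j
    using par[of "2*j+1"] that unfolding l_def by (cases "g (2*j+1)") auto
  have m2: "(2*j+1+1) mod 10 = 2 * (Suc j mod 5)" if "j < 5" for j :: nat
    using that by (cases "j = 4") auto
  have "inj_on p {..<5}"
  proof (rule inj_onI)
    fix j k assume "j \<in> {..<5}" "k \<in> {..<5}" "p j = p k"
    then have "g (2*j) = g (2*k)" using gp by simp
    moreover have "2*j \<in> {0..<10}" "2*k \<in> {0..<10}" using \<open>j \<in> {..<5}\<close> \<open>k \<in> {..<5}\<close> by auto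
    ultimately have "2*j = 2*k" using g(1) unfolding inj_on_def by blast
    then show "j = k" by simp
  qed
  moreover have "inj_on l {..<5}"
  proof (rule inj_onI)
    fix j k assume "j \<in> {..<5}" "k \<in> {..<5}" "l j = l k"
    then have "g (2*j+1) = g (2*k+1)" using gl by simp
    moreover have "2*j+1 \<in> {0..<10}" "2*k+1 \<in> {0..<10}" using \<open>j \<in> {..<5}\<close> \<open>k \<in> {..<5}\<close> by auto
    ultimately have "2*j+1 = 2*k+1" using g(1) unfolding inj_on_def by blast
    then show "j = k" by simp
  qed
  moreover have "\<forall>j<5. (p j, l j) \<in> incidences P L \<and> (p (Suc j mod 5), l j) \<in> incidences P L"
  proof (intro allI impI conjI)
    fix j :: nat assume j: "j < 5"
    have "2*j < 10" using j by simp
    then have "inc_adj P L (g (2*j)) (g ((2*j + 1) mod 10))" using g(2) by blast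
    moreover have "(2*j + 1) mod 10 = 2*j+1" using j by simp
    ultimately show "(p j, l j) \<in> incidences P L" using gp[OF j] gl[OF j] j adj_LR by simp
    have "2*j+1 < 10" using j by simp
    then have "inc_adj P L (g (2*j+1)) (g ((2*j + 1 + 1) mod 10))" using g(2) by blast
    then have "inc_adj P L (Inr (l j)) (Inl (p (Suc j mod 5)))"
      using gl[OF j] gp[of "Suc j mod 5"] m2[OF j] by simp
    then show "(p (Suc j mod 5), l j) \<in> incidences P L" by (rule adj_RL)
  qed
  ultimately show ?thesis by blast
qed



lemma line_inj: "line a b = line a' b' \<Longrightarrow> a = a' \<and> b = b'"
proof -
  assume e: "line a b = line a' b'"
  have "(0, b) \<in> line a' b'" using e[symmetric] unfolding line_def by auto
  then have bb: "b = b'" unfolding line_def by simp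
  have "(1, of_int a + b) \<in> line a' b'" using e[symmetric] unfolding line_def by auto
  then have "of_int a = (of_int a' :: real)" using bb unfolding line_def by simp
  then show ?thesis using bb by simp
qed

lemma is_line_line: "is_line (line a b)"
  unfolding is_line_def line_def
  by (rule exI[of _ "- of_int a"], rule exI[of _ 1], rule exI[of _ b]) (auto simp: algebra_simps)

lemma is_line_vert: "is_line {(x,y). x = (c::real)}"
  unfolding is_line_def
  by (rule exI[of _ 1], rule exI[of _ 0], rule exI[of _ c]) auto

lemma mainconfig:
  fixes m S H0 H n :: nat and A :: "int set"
  assumes g: "good m A" and fA: "finite A" and AS: "A \<subseteq> {0..<int S}"
    and HH: "H0 + S*m \<le> H" and nP: "m*H \<le> n" and nL: "card A * H0 \<le> n"
  shows "\<exists>P L. finite P \<and> card P = n \<and> finite L \<and> card L = n \<and> (\<forall>l\<in>L. is_line l) \<and>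
     C10_free (inc_adj P L) \<and> card A * H0 * m \<le> card (incidences P L)"
proof -
  define P0 where "P0 = (\<lambda>(x,y). (real x, real y)) ` ({..<m} \<times> {..<H})"
  define L0 where "L0 = (\<lambda>(a,b). line a (real b)) ` (A \<times> {..<H0})"
  define Pd where "Pd = (\<lambda>i. (0::real, -real (Suc i))) ` {..<n - m*H}"
  define Ld where "Ld = (\<lambda>i. {(x::real,y::real). x = -real (Suc i)}) ` {..<n - card A*H0}"
  define P where "P = P0 \<union> Pd"
  define L where "L = L0 \<union> Ld"
  have iP0: "inj_on (\<lambda>(x,y). (real x, real y)) ({..<m} \<times> {..<H})" by (auto simp: inj_on_def)
  have cP0: "card P0 = m*H" unfolding P0_def by (subst card_image[OF iP0]) (simp add: card_cartesian_product)
  have cPd: "card Pd = n - m*H" unfolding Pd_def by (subst card_image) (auto simp: inj_on_def)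
  have dP: "P0 \<inter> Pd = {}" unfolding P0_def Pd_def by auto
  have fP: "finite P" unfolding P_def P0_def Pd_def by auto
  have cP: "card P = n" unfolding P_def
    using card_Un_disjoint[of P0 Pd] dP cP0 cPd nP fP P_def by auto
  have iL0: "inj_on (\<lambda>(a,b). line a (real b)) (A \<times> {..<H0})"
    by (auto simp: inj_on_def dest: line_inj)
  have cL0: "card L0 = card A * H0" unfolding L0_def by (subst card_image[OF iL0]) (simp add: card_cartesian_product)
  have iLd: "inj_on (\<lambda>i. {(x::real,y::real). x = -real (Suc i)}) {..<n - card A*H0}"
  proof (rule inj_onI)
    fix i j assume "{(x::real,y::real). x = -real (Suc i)} = {(x::real,y::real). x = -real (Suc j)}"
    then have "(-real (Suc i), 0::real) \<in> {(x::real,y::real). x = -real (Suc j)}" by blast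
    then show "i = j" by simp
  qed
  have cLd: "card Ld = n - card A * H0" unfolding Ld_def by (subst card_image[OF iLd]) auto
  have dL: "L0 \<inter> Ld = {}"
  proof -
    { fix a b i assume "line a b = {(x::real,y::real). x = -real (Suc i)}"
      moreover have "(0, b) \<in> line a b" unfolding line_def by simp
      ultimately have False by auto }
    then have "\<And>a b i. line a b \<noteq> {(x::real,y::real). x = -real (Suc i)}" by blast
    then show ?thesis unfolding L0_def Ld_def by auto
  qed
  have fL: "finite L" unfolding L_def L0_def Ld_def using fA by auto
  have cL: "card L = n" unfolding L_def
    using card_Un_disjoint[of L0 Ld] dL cL0 cLd nL fL L_def by auto
  have isl: "\<forall>l\<in>L. is_line l" unfolding L_def L0_def Ld_def using is_line_line is_line_vert by auto
  have incP0: "p \<in> P0 \<and> l \<in> L0" if "(p, l) \<in> incidences P L" for p l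
  proof -
    have pl: "p \<in> P" "l \<in> L" "p \<in> l" using that unfolding incidences_def by auto
    show ?thesis
    proof (cases "p \<in> Pd")
      case True
      then obtain i where pi: "p = (0, -real (Suc i))" unfolding Pd_def by auto
      show ?thesis
      proof (cases "l \<in> L0")
        case True
        then obtain a b where "a \<in> A" "l = line a (real b)" unfolding L0_def by auto
        then show ?thesis using pl(3) pi unfolding line_def by auto
      next
        case False
        then obtain j where "l = {(x::real,y::real). x = -real (Suc j)}" using pl(2) unfolding L_def Ld_def by auto
        then show ?thesis using pl(3) pi by auto
      qed
    next
      case False
      then have pP0: "p \<in> P0" using pl(1) unfolding P_def by auto
      then obtain x y where pxy: "p = (real x, real y)" unfolding P0_def by auto
      show ?thesis
      proof (cases "l \<in> L0")
        case True then show ?thesis using pP0 by simp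
      next
        case False
        then obtain j where "l = {(x::real,y::real). x = -real (Suc j)}" using pl(2) unfolding L_def Ld_def by auto
        then show ?thesis using pl(3) pxy by auto
      qed
    qed
  qed
  have C10: "C10_free (inc_adj P L)"
    unfolding C10_free_def
  proof
    assume "has_cycle_of_length (inc_adj P L) 10"
    from cycle_extract[OF this] obtain p l where pl: "inj_on p {..<5}" "inj_on l {..<5}"
      "\<forall>j<5. (p j, l j) \<in> incidences P L \<and> (p (Suc j mod 5), l j) \<in> incidences P L" by blast
    have "\<forall>j\<in>{..<5}. \<exists>x. x < m \<and> fst (p j) = real x"
    proof
      fix j assume "j \<in> {..<5::nat}"
      then have "(p j, l j) \<in> incidences P L" using pl(3) by simp
      then have "p j \<in> P0" using incP0 by blast
      then show "\<exists>x. x < m \<and> fst (p j) = real x" unfolding P0_def by auto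
    qed
    from bchoice[OF this] obtain X where X: "\<forall>j\<in>{..<5}. X j < m \<and> fst (p j) = real (X j)" by blast
    have "\<forall>j\<in>{..<5}. \<exists>ab. fst ab \<in> A \<and> l j = line (fst ab) (snd ab)"
    proof
      fix j assume "j \<in> {..<5::nat}"
      then have "(p j, l j) \<in> incidences P L" using pl(3) by simp
      then have "l j \<in> L0" using incP0 by blast
      then show "\<exists>ab. fst ab \<in> A \<and> l j = line (fst ab) (snd ab)" unfolding L0_def by auto
    qed
    from bchoice[OF this] obtain ab where ab: "\<forall>j\<in>{..<5}. fst (ab j) \<in> A \<and> l j = line (fst (ab j)) (snd (ab j))"
      by blast
    define Y where "Y j = snd (p j)" for j
    have pe: "p j = (real (X j), Y j)" if "j < 5" for j
      using X that unfolding Y_def by (simp add: prod_eq_iff)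
    have le: "l j = line (fst (ab j)) (snd (ab j))" if "j < 5" for j using ab that by auto
    show False
    proof (rule cycle_core[OF g, of "\<lambda>j. fst (ab j)" X Y "\<lambda>j. snd (ab j)"])
      show "\<forall>j<5. fst (ab j) \<in> A" using ab by auto
      show "\<forall>j<5. X j < m" using X by auto
      show "\<forall>j<5. (real (X j), Y j) \<in> line (fst (ab j)) (snd (ab j)) \<and>
          (real (X (Suc j mod 5)), Y (Suc j mod 5)) \<in> line (fst (ab j)) (snd (ab j))"
      proof (intro allI impI)
        fix j :: nat assume j: "j < 5"
        have k: "Suc j mod 5 < 5" by simp
        show "(real (X j), Y j) \<in> line (fst (ab j)) (snd (ab j)) \<and>
          (real (X (Suc j mod 5)), Y (Suc j mod 5)) \<in> line (fst (ab j)) (snd (ab j))"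
        proof -
          have "p j \<in> l j" "p (Suc j mod 5) \<in> l j" using pl(3) j unfolding incidences_def by auto
          then show ?thesis using pe[OF j] pe[OF k] le[OF j] by simp
        qed
      qed
      show "inj_on (\<lambda>j. (real (X j), Y j)) {..<5}"
        using pl(1) pe by (simp add: inj_on_def)
      show "inj_on (\<lambda>j. line (fst (ab j)) (snd (ab j))) {..<5}"
        using pl(2) le by (simp add: inj_on_def)
    qed
  qed
  define F where "F = (\<lambda>(a::int,b::nat,x::nat). ((real x, real (nat a * x + b)), line a (real b)))"
  have Fin: "F ` (A \<times> {..<H0} \<times> {..<m}) \<subseteq> incidences P L"
  proof
    fix z assume "z \<in> F ` (A \<times> {..<H0} \<times> {..<m})"
    then obtain a b x where abx: "a \<in> A" "b < H0" "x < m" "z = ((real x, real (nat a * x + b)), line a (real b))"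
      unfolding F_def by auto
    have aS: "0 \<le> a" "a < int S" using AS abx(1) by auto
    then have a0: "0 \<le> a" "nat a \<le> S" by auto
    have "nat a * x \<le> S * m" using a0(2) abx(3) by (intro mult_mono) auto
    then have yH: "nat a * x + b < H" using abx(2) HH by linarith
    have pt: "(real x, real (nat a * x + b)) \<in> P0" unfolding P0_def using abx(3) yH by (intro image_eqI[of _ _ "(x, nat a * x + b)"]) auto
    have ln: "line a (real b) \<in> L0" unfolding L0_def using abx(1,2) by (intro image_eqI[of _ _ "(a, b)"]) auto
    have on: "(real x, real (nat a * x + b)) \<in> line a (real b)"
      unfolding line_def using a0(1) by simp
    show "z \<in> incidences P L" unfolding incidences_def P_def L_def using abx(4) pt ln on by auto
  qed
  have Finj: "inj_on F (A \<times> {..<H0} \<times> {..<m})"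
  proof (rule inj_onI)
    fix u v assume "u \<in> A \<times> {..<H0} \<times> {..<m}" "v \<in> A \<times> {..<H0} \<times> {..<m}" "F u = F v"
    then obtain a b x a' b' x' where uv: "u = (a,b,x)" "v = (a',b',x')" and e: "F (a,b,x) = F (a',b',x')"
      by (metis prod_cases3)
    have l: "line a (real b) = line a' (real b')" and "real x = real x'" using e unfolding F_def by auto
    then have "x = x'" by simp
    moreover from line_inj[OF l] have "a = a'" "b = b'" by simp_all
    ultimately show "u = v" using uv by simp
  qed
  have finc: "finite (incidences P L)"
    by (rule finite_subset[of _ "P \<times> L"]) (use fP fL in \<open>auto simp: incidences_def\<close>)
  have "card A * H0 * m = card (F ` (A \<times> {..<H0} \<times> {..<m}))"
    by (subst card_image[OF Finj]) (simp add: card_cartesian_product)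
  also have "\<dots> \<le> card (incidences P L)" by (rule card_mono[OF finc Fin])
  finally show ?thesis using fP cP fL cL isl C10 by blast
qed



lemma asym:
  fixes n m :: nat and K :: real
  assumes m1: "1 \<le> m" and nK: "real n \<le> K * real m ^ 13" and n1: "1 \<le> n" and K1: "1 \<le> K"
  shows "real n powr (1 + 1/15) \<le> K^2 * real m ^ 14"
proof -
  have A: "real n powr (1 + 1/15) \<le> real n powr (1 + 1/13)"
    using n1 by (intro powr_mono) auto
  have B: "real n powr (1 + 1/13) = real n * real n powr (1/13)"
    unfolding powr_add by simp
  have C1: "real n powr (1/13) \<le> (K * real m ^ 13) powr (1/13)"
    using nK n1 by (intro powr_mono2) auto
  have "(real m ^ 13) powr (1/13) = real m"
  proof -
    have mp: "real m > 0" using m1 by simp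
    have e: "real m powr (real 13) = real m ^ 13" by (rule powr_realpow[OF mp])
    have "(real m ^ 13) powr (1/13) = (real m powr (real 13)) powr (1/13)" by (simp only: e)
    also have "\<dots> = real m powr (real 13 * (1/13))" by (rule powr_powr)
    also have "\<dots> = real m" using mp by simp
    finally show ?thesis .
  qed
  then have C2: "(K * real m ^ 13) powr (1/13) = K powr (1/13) * real m"
    using K1 m1 by (simp add: powr_mult)
  have C3: "K powr (1/13) \<le> K powr 1"
    using K1 by (intro powr_mono) auto
  have C4: "K powr (1/13) * real m \<le> K * real m"
    using C3 K1 by (intro mult_right_mono) auto
  have C: "real n powr (1/13) \<le> K * real m"
    using C1 C2 C4 by linarith
  have "real n * real n powr (1/13) \<le> (K * real m ^ 13) * (K * real m)"
    using nK C n1 by (intro mult_mono) auto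
  also have "\<dots> = K^2 * real m ^ 14"
  proof -
    have "real m ^ 14 = real m ^ 13 * real m" by (simp only: power_Suc2[symmetric]) simp
    then show ?thesis by (simp add: power2_eq_square)
  qed
  finally show ?thesis using A B by simp
qed

lemma exm:
  fixes n :: nat
  shows "\<exists>m. 2048*m^13 \<le> n \<and> n < 2048*(m+1)^13"
proof -
  have ex: "\<exists>k::nat. \<not> 2048*k^13 \<le> n"
  proof (intro exI notI)
    assume h: "2048*(n+1)^13 \<le> n"
    have "n + 1 \<le> (n+1)^13" by (rule self_le_power) auto
    then show False using h by linarith
  qed
  define k where "k = (LEAST k::nat. \<not> 2048*k^13 \<le> n)"
  have k: "\<not> 2048*k^13 \<le> n" unfolding k_def by (rule LeastI_ex[OF ex])
  have k0: "k \<noteq> 0" using k by (cases k) auto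
  have "2048*(k-1)^13 \<le> n"
  proof (rule ccontr)
    assume "\<not> 2048*(k-1)^13 \<le> n"
    then have "k \<le> k - 1" unfolding k_def by (rule Least_le)
    then show False using k0 by simp
  qed
  moreover have "n < 2048*((k-1)+1)^13" using k k0 by simp
  ultimately show ?thesis by blast
qed

lemma good01: "good 1 {0}"
  using good_empty[of 1] unfolding good_def by simp

theorem theorem1p3:
  shows "\<exists>c::real. c > 0 \<and>
    (\<forall>n::nat. n > 1 \<longrightarrow>
      (\<exists>(P :: point set) (L :: point set set).
         finite P \<and> card P = n \<and> finite L \<and> card L = n \<and> (\<forall>l\<in>L. is_line l) \<and>
         C10_free (inc_adj P L) \<and>
         real (card (incidences P L)) \<ge> c * real n powr (1 + 1/15)))"
proof (intro exI[of _ "1 / 2^48"] conjI allI impI)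
  show "(0::real) < 1 / 2^48" by simp
  fix n :: nat assume n1: "n > 1"
  obtain m where m: "2048*m^13 \<le> n" "n < 2048*(m+1)^13" using exm by blast
  show "\<exists>(P :: point set) (L :: point set set).
         finite P \<and> card P = n \<and> finite L \<and> card L = n \<and> (\<forall>l\<in>L. is_line l) \<and>
         C10_free (inc_adj P L) \<and>
         real (card (incidences P L)) \<ge> 1 / 2^48 * real n powr (1 + 1/15)"
  proof (cases "m = 0")
    case True
    then have n2: "n < 2048" using m by simp
    obtain P L where PL: "finite P" "card P = n" "finite L" "card L = n" "\<forall>l\<in>L. is_line l"
      "C10_free (inc_adj P L)" "card {0::int} * 1 * 1 \<le> card (incidences P L)"
      using mainconfig[OF good01, of 1 1 2 n] n1 by auto
    have "real n powr (1 + 1/15) \<le> real n powr 2" using n1 by (intro powr_mono) auto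
    also have "\<dots> = real n ^ 2" using n1 by (simp add: powr_realpow)
    also have "\<dots> \<le> 2048 ^ 2" using n2 by (intro power_mono) auto
    finally have "1 / 2^48 * real n powr (1 + 1/15) \<le> 1" by simp
    then show ?thesis using PL by (intro exI[of _ P] exI[of _ L]) auto
  next
    case False
    then have m1: "m \<ge> 1" by simp
    obtain A where A: "finite A" "A \<subseteq> {0..<int (1024 * m^11)}" "card A = m" "good m A"
      using greedy[of m m] by auto
    define S where "S = 1024 * m^11"
    have p13: "m^13 = m^11 * m * m" by (simp flip: power_Suc2 power_add)
    have p14: "m^14 = m^11 * m * m * m" by (simp flip: power_Suc2 power_add)
    have e1: "m * (2*S*m) = 2048 * m^13" unfolding S_def p13 by (simp add: algebra_simps)
    have e2: "card A * (S*m) = 1024 * m^13" unfolding S_def A(3) p13 by (simp add: algebra_simps)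
    have e3: "card A * (S*m) * m = 1024 * m^14" unfolding S_def A(3) p14 by (simp add: algebra_simps)
    have AS: "A \<subseteq> {0..<int S}" using A(2) unfolding S_def .
    have HH: "S*m + S*m \<le> 2*S*m" by simp
    have nP: "m*(2*S*m) \<le> n" unfolding e1 using m(1) .
    have nL: "card A * (S*m) \<le> n" unfolding e2 using m(1) by linarith
    obtain P L where PL: "finite P" "card P = n" "finite L" "card L = n" "\<forall>l\<in>L. is_line l"
      "C10_free (inc_adj P L)" "card A * (S*m) * m \<le> card (incidences P L)"
      using mainconfig[OF A(4) A(1) AS HH nP nL] by blast
    have "(m+1)^13 \<le> (2*m)^13" using m1 by (intro power_mono) auto
    then have "n < 2048 * (2*m)^13" using m(2) by linarith
    then have "real n < real (2048 * (2*m)^13)" by (simp only: of_nat_less_iff)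
    then have "real n \<le> 2048 * (2 * real m)^13" by simp
    also have "\<dots> = 2^24 * real m ^ 13" by (simp add: power_mult_distrib)
    finally have nK: "real n \<le> 2^24 * real m ^ 13" .
    have "real n powr (1 + 1/15) \<le> (2^24)^2 * real m ^ 14"
      by (rule asym[OF m1 nK]) (use n1 in auto)
    then have "1 / 2^48 * real n powr (1 + 1/15) \<le> real m ^ 14" by simp
    also have "\<dots> \<le> real (card A * (S*m) * m)" unfolding e3 by simp
    also have "\<dots> \<le> real (card (incidences P L))" using PL(7) by (simp only: of_nat_le_iff)
    finally show ?thesis using PL by (intro exI[of _ P] exI[of _ L]) auto
  qed
qed


end
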